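(* Let $\emptyset\neq S\subseteq\{1,\dots,n\}$. Then $\nabla\Phi(\mathbf{x}(S))\,\mathbf{d}\le 0$ for all $\mathbf{d}\in\mathcal{F}(\mathbf{x}(S))$. Moreover, if $\nabla^2\Phi(\tilde{\mathbf{x}})$ is positive definite for every $\tilde{\mathbf{x}}\in\Delta$, then $\nabla\Phi(\mathbf{x}(S))\,\mathbf{d}<0$ for every $\mathbf{d}\in\mathcal{F}(\mathbf{x}(S))$ with $\mathrm{supp}(\mathbf{d})\not\subseteq S$.
   Context: Let $\Delta=\{\mathbf{x}\in\mathbb{R}^n:\mathbf{0}\le\mathbf{x}\le\mathbf{1},\ \mathbf{1}^{\mathsf T}\mathbf{x}=1\}$ and $\mathrm{supp}(\mathbf{x})=\{i:x_i\neq0\}$. For non-empty $S\subseteq\{1,\dots,n\}$, $\mathbf{x}(S)\in\Delta$ has $x(S)_i=1/|S|$ for $i\in S$ and $0$ otherwise. For $\mathbf{x}\in\Delta$, $\mathcal{F}(\mathbf{x})=\{\mathbf{d}\in\mathbb{R}^n:\mathbf{1}^{\mathsf T}\mathbf{d}=0,\ d_i\ge0\text{ whenever }x_i=0\}$, and $\mathcal{P}(\mathbf{x})$ is the set of vectors in $\Delta$ obtained by permuting the coordinates of $\mathbf{x}$. Let $\Phi:X\to\mathbb{R}$ be twice continuously differentiable on an open set $X\supset\Delta$, satisfying for every $\mathbf{x}\in\Delta$: (C1) $\nabla^2\Phi(\mathbf{x})$ is positive semidefinite; (C2) $\|\nabla^2\Phi(\mathbf{x})\|_2<2$ (spectral norm);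 (C3) $\Phi$ is constant on $\mathcal{P}(\mathbf{x})$. The gradient $\nabla\Phi(\mathbf{x})$ is a row vector. *)

theory Defs
  imports "HOL-Analysis.Analysis"
begin

text \<open>Coordinates of R^n are indexed by the finite type 'n (so n = CARD('n)).\<close>

definition Delta_simplex :: "(real ^ 'n) set" where
  "Delta_simplex = {x. (\<forall>i. 0 \<le> x $ i \<and> x $ i \<le> 1) \<and> (\<Sum>i\<in>UNIV. x $ i) = 1}"

definition supp :: "real ^ 'n \<Rightarrow> 'n set" where
  "supp x = {i. x $ i \<noteq> 0}"

definition xS :: "'n set \<Rightarrow> real ^ 'n" where
  "xS S = (\<chi> i. if i \<in> S then 1 / real (card S) else 0)"

definition feasible_dirs :: "real ^ 'n \<Rightarrow> (real ^ 'n) set" where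
  "feasible_dirs x = {d. (\<Sum>i\<in>UNIV. d $ i) = 0 \<and> (\<forall>i. x $ i = 0 \<longrightarrow> d $ i \<ge> 0)}"

definition perms_of :: "real ^ 'n \<Rightarrow> (real ^ 'n) set" where
  "perms_of x = {(\<chi> i. x $ p i) | p. p permutes (UNIV :: 'n set)}"

definition psd :: "real ^ 'n ^ 'n \<Rightarrow> bool" where
  "psd A \<longleftrightarrow> (\<forall>v. 0 \<le> v \<bullet> (A *v v))"

definition posdef :: "real ^ 'n ^ 'n \<Rightarrow> bool" where
  "posdef A \<longleftrightarrow> (\<forall>v. v \<noteq> 0 \<longrightarrow> 0 < v \<bullet> (A *v v))"

text \<open>Spectral norm = operator norm w.r.t. the Euclidean norm.\<close>
definition spec_norm :: "real ^ 'n ^ 'n \<Rightarrow> real" where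
  "spec_norm A = onorm (\<lambda>v. A *v v)"

end

theory Submission
  imports Defs
begin


lemma line_deriv:
  fixes f :: "real ^ 'n \<Rightarrow> real"
  assumes "(f has_derivative (\<lambda>d. g \<bullet> d)) (at (x + t *\<^sub>R w))"
  shows "((\<lambda>s. f (x + s *\<^sub>R w)) has_real_derivative (g \<bullet> w)) (at t)"
proof -
  have l: "((\<lambda>s. x + s *\<^sub>R w) has_derivative (\<lambda>h. h *\<^sub>R w)) (at t)"
    by (auto intro!: derivative_eq_intros)
  have "((\<lambda>s. f (x + s *\<^sub>R w)) has_derivative (\<lambda>h. g \<bullet> (h *\<^sub>R w))) (at t)"
    using has_derivative_compose[OF l assms] by simp
  moreover have "(\<lambda>h. g \<bullet> (h *\<^sub>R w)) = (*) (g \<bullet> w)" by (auto simp: algebra_simps)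
  ultimately show ?thesis unfolding has_field_derivative_def by simp
qed

lemma line_deriv2:
  fixes G :: "real ^ 'n \<Rightarrow> real ^ 'n"
  assumes "(G has_derivative (\<lambda>d. A *v d)) (at (x + t *\<^sub>R w))"
  shows "((\<lambda>s. G (x + s *\<^sub>R w) \<bullet> w) has_real_derivative ((A *v w) \<bullet> w)) (at t)"
proof -
  have l: "((\<lambda>s. x + s *\<^sub>R w) has_derivative (\<lambda>h. h *\<^sub>R w)) (at t)"
    by (auto intro!: derivative_eq_intros)
  have "((\<lambda>s. G (x + s *\<^sub>R w)) has_derivative (\<lambda>h. A *v (h *\<^sub>R w))) (at t)"
    using has_derivative_compose[OF l assms] by simp
  then have "((\<lambda>s. G (x + s *\<^sub>R w) \<bullet> w) has_derivative (\<lambda>h. (A *v (h *\<^sub>R w)) \<bullet> w)) (at t)"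
    by (rule has_derivative_inner_left)
  moreover have "(\<lambda>h. (A *v (h *\<^sub>R w)) \<bullet> w) = (*) ((A *v w) \<bullet> w)"
    by (auto simp: algebra_simps matrix_vector_mult_scaleR)
  ultimately show ?thesis unfolding has_field_derivative_def by simp
qed



lemma pair_mvt:
  fixes \<Phi> :: "real ^ 'n \<Rightarrow> real" and grad :: "real ^ 'n \<Rightarrow> real ^ 'n"
    and H :: "real ^ 'n \<Rightarrow> real ^ 'n ^ 'n"
  assumes c: "0 < c" and inX: "\<And>s. 0 \<le> s \<Longrightarrow> s \<le> c \<Longrightarrow> x + s *\<^sub>R v \<in> X"
    and grad: "\<And>x. x \<in> X \<Longrightarrow> (\<Phi> has_derivative (\<lambda>d. grad x \<bullet> d)) (at x)"
    and hess: "\<And>x. x \<in> X \<Longrightarrow> (grad has_derivative (\<lambda>d. H x *v d)) (at x)"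
    and eq: "\<Phi> (x + c *\<^sub>R v) = \<Phi> x"
  shows "\<exists>\<xi> \<eta>. 0 < \<xi> \<and> 0 < \<eta> \<and> \<eta> < c \<and> grad x \<bullet> v = - \<xi> * ((H (x + \<eta> *\<^sub>R v) *v v) \<bullet> v)"
proof -
  have d1: "((\<lambda>s. \<Phi> (x + s *\<^sub>R v)) has_real_derivative (grad (x + s *\<^sub>R v) \<bullet> v)) (at s)"
    if "0 \<le> s" "s \<le> c" for s
    using line_deriv[OF grad[OF inX[OF that]]] .
  obtain z where z: "0 < z" "z < c"
    "\<Phi> (x + c *\<^sub>R v) - \<Phi> (x + 0 *\<^sub>R v) = (c - 0) * (grad (x + z *\<^sub>R v) \<bullet> v)"
    using MVT2[OF c, of "\<lambda>s. \<Phi> (x + s *\<^sub>R v)" "\<lambda>s. grad (x + s *\<^sub>R v) \<bullet> v"] d1 by blast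
  have gz: "grad (x + z *\<^sub>R v) \<bullet> v = 0" using z eq c by simp
  have d2: "((\<lambda>s. grad (x + s *\<^sub>R v) \<bullet> v) has_real_derivative ((H (x + s *\<^sub>R v) *v v) \<bullet> v)) (at s)"
    if "0 \<le> s" "s \<le> z" for s
    using line_deriv2[OF hess[OF inX]] that z by auto
  obtain y where y: "0 < y" "y < z"
    "grad (x + z *\<^sub>R v) \<bullet> v - grad (x + 0 *\<^sub>R v) \<bullet> v = (z - 0) * ((H (x + y *\<^sub>R v) *v v) \<bullet> v)"
    using MVT2[OF z(1), of "\<lambda>s. grad (x + s *\<^sub>R v) \<bullet> v" "\<lambda>s. (H (x + s *\<^sub>R v) *v v) \<bullet> v"] d2 by blast
  show ?thesis
    apply (rule exI[of _ z], rule exI[of _ y])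
    using y z gz by auto
qed



lemma delta_two_le:
  assumes "y \<in> Delta_simplex" "i \<noteq> j"
  shows "y $ i + y $ j \<le> 1"
proof -
  have "(\<Sum>l\<in>{i,j}. y $ l) \<le> (\<Sum>l\<in>UNIV. y $ l)"
    by (rule sum_mono2) (use assms in \<open>auto simp: Delta_simplex_def\<close>)
  then show ?thesis using assms by (simp add: Delta_simplex_def)
qed

lemma move_mass:
  assumes y: "y \<in> Delta_simplex" and ij: "i \<noteq> j" and s: "0 \<le> s" "s \<le> y $ i"
  shows "y + s *\<^sub>R (axis j 1 - axis i 1) \<in> Delta_simplex"
proof -
  have comp: "(y + s *\<^sub>R (axis j 1 - axis i 1)) $ l = y $ l + s * ((if l = j then 1 else 0) - (if l = i then 1 else 0))" for l
    by (simp add: axis_def)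
  have two: "y $ i + y $ j \<le> 1" using delta_two_le[OF y ij] .
  have yb: "0 \<le> y $ l" "y $ l \<le> 1" for l using y by (auto simp: Delta_simplex_def)
  have sm: "(\<Sum>l\<in>UNIV. y $ l + s * ((if l = j then 1 else 0) - (if l = i then (1::real) else 0))) = (\<Sum>l\<in>UNIV. y $ l)"
    by (simp add: sum.distrib sum_subtractf sum_distrib_left[symmetric] right_diff_distrib)
  have bnd: "0 \<le> y $ l + s * ((if l = j then 1 else 0) - (if l = i then 1 else 0)) \<and>
      y $ l + s * ((if l = j then 1 else 0) - (if l = i then 1 else 0)) \<le> 1" for l
  proof (cases "l = j")
    case True then show ?thesis using ij s two yb[of i] yb[of j] by auto
  next
    case False then show ?thesis using ij s two yb[of i] yb[of l] by auto
  qed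
  have ys: "(\<Sum>l\<in>UNIV. y $ l) = 1" using y by (simp add: Delta_simplex_def)
  show ?thesis
    unfolding Delta_simplex_def mem_Collect_eq comp sm ys using bnd by simp
qed

lemma perm_mem: "(\<chi> l. y $ Transposition.transpose a b l) \<in> perms_of y"
  unfolding perms_of_def using permutes_swap_id[of a UNIV b] by blast

lemma xS_delta:
  assumes "S \<noteq> {}"
  shows "xS (S::'n::finite set) \<in> Delta_simplex"
proof -
  have k: "card S > 0" using assms card_gt_0_iff[of S] by simp
  have "(\<Sum>l\<in>UNIV. xS S $ l) = (\<Sum>l\<in>S. 1 / real (card S))"
    unfolding xS_def by (simp add: sum.If_cases)
  also have "\<dots> = 1" using k assms by simp
  finally have s1: "(\<Sum>l\<in>UNIV. xS S $ l) = 1" .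
  moreover have "0 \<le> xS S $ l \<and> xS S $ l \<le> 1" for l
    using k by (auto simp: xS_def)
  ultimately show ?thesis unfolding Delta_simplex_def by simp
qed



theorem lemma4:
  fixes \<Phi> :: "real ^ 'n \<Rightarrow> real"
    and grad :: "real ^ 'n \<Rightarrow> real ^ 'n"
    and H :: "real ^ 'n \<Rightarrow> real ^ 'n ^ 'n"
    and X :: "(real ^ 'n) set"
    and S :: "'n set"
  assumes X_open: "open X" and X_sup: "Delta_simplex \<subseteq> X"
    and grad: "\<And>x. x \<in> X \<Longrightarrow> (\<Phi> has_derivative (\<lambda>d. grad x \<bullet> d)) (at x)"
    and hess: "\<And>x. x \<in> X \<Longrightarrow> (grad has_derivative (\<lambda>d. H x *v d)) (at x)"
    and hess_cont: "continuous_on X H"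
    and C1: "\<And>x. x \<in> Delta_simplex \<Longrightarrow> psd (H x)"
    and C2: "\<And>x. x \<in> Delta_simplex \<Longrightarrow> spec_norm (H x) < 2"
    and C3: "\<And>x y. x \<in> Delta_simplex \<Longrightarrow> y \<in> perms_of x \<Longrightarrow> \<Phi> y = \<Phi> x"
    and S_ne: "S \<noteq> {}"
  shows "(\<forall>d \<in> feasible_dirs (xS S). grad (xS S) \<bullet> d \<le> 0)
    \<and> ((\<forall>x \<in> Delta_simplex. posdef (H x)) \<longrightarrow>
         (\<forall>d \<in> feasible_dirs (xS S). \<not> supp d \<subseteq> S \<longrightarrow> grad (xS S) \<bullet> d < 0))"
proof -
  define x where "x = xS S"
  define k where "k = real (card S)"
  define g where "g = grad x"
  have kpos: "k > 0" using S_ne card_gt_0_iff[of S] unfolding k_def by simp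
  have xD: "x \<in> Delta_simplex" unfolding x_def using xS_delta[OF S_ne] .
  have xi: "x $ l = (if l \<in> S then 1 / k else 0)" for l
    unfolding x_def xS_def k_def by simp
  have XD: "y \<in> X" if "y \<in> Delta_simplex" for y using that X_sup by blast
  have k1: "1 / k \<le> 1"
  proof -
    have "card S \<ge> 1" using S_ne card_gt_0_iff[of S] by simp
    then show ?thesis unfolding k_def by simp
  qed
  have factA: "\<exists>\<xi> \<eta>. 0 < \<xi> \<and> 0 < \<eta> \<and> \<eta> < 1 / k \<and>
      g $ j - g $ i = - \<xi> * ((H (x + \<eta> *\<^sub>R (axis j 1 - axis i 1)) *v (axis j 1 - axis i 1)) \<bullet> (axis j 1 - axis i 1))
      \<and> x + \<eta> *\<^sub>R (axis j 1 - axis i 1) \<in> Delta_simplex"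
    if iS: "i \<in> S" and jS: "j \<notin> S" for i j
  proof -
    define v :: "real ^ 'n" where "v = axis j 1 - axis i 1"
    have ij: "i \<noteq> j" using iS jS by blast
    have inD: "x + s *\<^sub>R v \<in> Delta_simplex" if "0 \<le> s" "s \<le> 1 / k" for s
      unfolding v_def using move_mass[OF xD, of i j s] ij that xi iS by simp
    have eqv: "x + (1 / k) *\<^sub>R v = (\<chi> l. x $ Transposition.transpose i j l)"
      unfolding vec_eq_iff v_def
      using ij iS jS by (auto simp: xi axis_def transpose_def)
    have eq: "\<Phi> (x + (1 / k) *\<^sub>R v) = \<Phi> x"
      unfolding eqv by (rule C3[OF xD perm_mem])
    obtain \<xi> \<eta> where h: "0 < \<xi>" "0 < \<eta>" "\<eta> < 1 / k"
      "grad x \<bullet> v = - \<xi> * ((H (x + \<eta> *\<^sub>R v) *v v) \<bullet> v)"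
      using pair_mvt[of "1 / k" x v X \<Phi> grad H, OF _ _ grad hess eq] kpos inD XD by auto
    have gv: "grad x \<bullet> v = g $ j - g $ i"
      unfolding v_def g_def by (simp add: inner_diff_right inner_axis)
    show ?thesis
      using h gv inD[of \<eta>] unfolding v_def[symmetric] by (intro exI[of _ \<xi>] exI[of _ \<eta>]) auto
  qed
  have factA1: "g $ j \<le> g $ i" if ij1: "i \<in> S" "j \<notin> S" for i j
  proof -
    obtain \<xi> \<eta> where h: "0 < \<xi>" "0 < \<eta>" "\<eta> < 1 / k"
      "g $ j - g $ i = - \<xi> * ((H (x + \<eta> *\<^sub>R (axis j 1 - axis i 1)) *v (axis j 1 - axis i 1)) \<bullet> (axis j 1 - axis i 1))"
      "x + \<eta> *\<^sub>R (axis j 1 - axis i 1) \<in> Delta_simplex"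
      using factA[OF ij1] by blast
    have "0 \<le> (H (x + \<eta> *\<^sub>R (axis j 1 - axis i 1)) *v (axis j 1 - axis i 1)) \<bullet> (axis j 1 - axis i 1)"
      using C1[OF h(5)] unfolding psd_def by (simp add: inner_commute)
    then have "0 \<le> \<xi> * ((H (x + \<eta> *\<^sub>R (axis j 1 - axis i 1)) *v (axis j 1 - axis i 1)) \<bullet> (axis j 1 - axis i 1))"
      using h(1) by (metis less_imp_le mult_nonneg_nonneg)
    then show ?thesis using h(4) by linarith
  qed
  have factA2: "g $ j < g $ i" if ij2: "i \<in> S" "j \<notin> S" "\<forall>x \<in> Delta_simplex. posdef (H x)" for i j
  proof -
    obtain \<xi> \<eta> where h: "0 < \<xi>" "0 < \<eta>" "\<eta> < 1 / k"
      "g $ j - g $ i = - \<xi> * ((H (x + \<eta> *\<^sub>R (axis j 1 - axis i 1)) *v (axis j 1 - axis i 1)) \<bullet> (axis j 1 - axis i 1))"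
      "x + \<eta> *\<^sub>R (axis j 1 - axis i 1) \<in> Delta_simplex"
      using factA[OF ij2(1,2)] by blast
    have nz: "axis j 1 - axis i 1 \<noteq> (0 :: real ^ 'n)"
    proof
      assume "axis j 1 - axis i 1 = (0 :: real ^ 'n)"
      then have "(axis j 1 - axis i 1) $ j = (0 :: real ^ 'n) $ j" by simp
      then show False using ij2 by (auto simp: axis_def split: if_splits)
    qed
    have "0 < (H (x + \<eta> *\<^sub>R (axis j 1 - axis i 1)) *v (axis j 1 - axis i 1)) \<bullet> (axis j 1 - axis i 1)"
      using ij2(3) h(5) nz unfolding posdef_def by (simp add: inner_commute)
    then have "0 < \<xi> * ((H (x + \<eta> *\<^sub>R (axis j 1 - axis i 1)) *v (axis j 1 - axis i 1)) \<bullet> (axis j 1 - axis i 1))"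
      using h(1) by (metis mult_pos_pos)
    then show ?thesis using h(4) by linarith
  qed
  have factB: "g $ i = g $ i'" if iS: "i \<in> S" and i'S: "i' \<in> S" for i i'
  proof (cases "i = i'")
    case True then show ?thesis by simp
  next
    case False
    define w :: "real ^ 'n" where "w = axis i 1 - axis i' 1"
    define T where "T = {- (1 / k) <..< 1 / k}"
    have inD: "x + t *\<^sub>R w \<in> Delta_simplex" if "t \<in> T" for t
    proof (cases "t \<ge> 0")
      case True
      then show ?thesis unfolding w_def
        using move_mass[OF xD, of i' i t] False that xi i'S unfolding T_def by simp
    next
      case neg: False
      have "x + t *\<^sub>R w = x + (- t) *\<^sub>R (axis i' 1 - axis i 1)"
        unfolding w_def by (simp add: algebra_simps)
      then show ?thesis
        using move_mass[OF xD, of i i' "- t"] False that xi iS neg unfolding T_def by simp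
    qed
    have sym: "\<Phi> (x + t *\<^sub>R (- w)) = \<Phi> (x + t *\<^sub>R w)" if "t \<in> T" for t
    proof -
      have "x + t *\<^sub>R (- w) = (\<chi> l. (x + t *\<^sub>R w) $ Transposition.transpose i i' l)"
        unfolding vec_eq_iff w_def
        using False iS i'S by (auto simp: xi axis_def transpose_def)
      then show ?thesis using C3[OF inD[OF that] perm_mem] by simp
    qed
    have d1: "((\<lambda>t. \<Phi> (x + t *\<^sub>R w)) has_real_derivative (g \<bullet> w)) (at 0)"
      using line_deriv[of \<Phi> g x 0 w] grad[OF XD[OF xD]] unfolding g_def by simp
    have d2: "((\<lambda>t. \<Phi> (x + t *\<^sub>R (- w))) has_real_derivative (g \<bullet> (- w))) (at 0)"
      using line_deriv[of \<Phi> g x 0 "- w"] grad[OF XD[OF xD]] unfolding g_def by simp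
    have d3: "((\<lambda>t. \<Phi> (x + t *\<^sub>R w)) has_real_derivative (g \<bullet> (- w))) (at 0)"
      by (rule has_field_derivative_transform_within_open[OF d2, of T])
        (use kpos sym in \<open>auto simp: T_def\<close>)
    have "g \<bullet> w = g \<bullet> (- w)" using DERIV_unique[OF d1 d3] .
    then have "g \<bullet> w = 0" by simp
    then show ?thesis unfolding w_def by (simp add: inner_diff_right inner_axis)
  qed
  obtain i0 where i0: "i0 \<in> S" using S_ne by blast
  define a where "a = g $ i0"
  have gS: "g $ l = a" if "l \<in> S" for l using factB[OF that i0] unfolding a_def .
  have key: "g \<bullet> d = (\<Sum>l\<in>- S. (g $ l - a) * d $ l)" if "d \<in> feasible_dirs x" for d
  proof -
    have s0: "(\<Sum>l\<in>UNIV. d $ l) = 0" using that by (simp add: feasible_dirs_def)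
    have split: "(\<Sum>l\<in>UNIV. f l) = (\<Sum>l\<in>S. f l) + (\<Sum>l\<in>- S. f l)" for f :: "'n \<Rightarrow> real"
      using sum.Int_Diff[of UNIV f S] by (simp add: Compl_eq_Diff_UNIV)
    have "g \<bullet> d = (\<Sum>l\<in>UNIV. g $ l * d $ l)" by (simp add: inner_vec_def)
    also have "\<dots> = (\<Sum>l\<in>S. g $ l * d $ l) + (\<Sum>l\<in>- S. g $ l * d $ l)" by (rule split)
    also have "(\<Sum>l\<in>S. g $ l * d $ l) = a * (\<Sum>l\<in>S. d $ l)"
      by (simp add: gS sum_distrib_left)
    also have "(\<Sum>l\<in>S. d $ l) = - (\<Sum>l\<in>- S. d $ l)" using s0 split[of "\<lambda>l. d $ l"] by simp
    finally show ?thesis by (simp add: sum_distrib_left left_diff_distrib sum_subtractf)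
  qed
  have dnn: "0 \<le> d $ l" if "d \<in> feasible_dirs x" "l \<notin> S" for d l
    using that xi[of l] by (simp add: feasible_dirs_def)
  have P1: "g \<bullet> d \<le> 0" if "d \<in> feasible_dirs x" for d
  proof -
    have "(\<Sum>l\<in>- S. (g $ l - a) * d $ l) \<le> 0"
    proof (rule sum_nonpos)
      fix l assume "l \<in> - S"
      then show "(g $ l - a) * d $ l \<le> 0"
        using factA1[OF i0, of l] dnn[OF that, of l] unfolding a_def
        by (simp add: mult_nonpos_nonneg)
    qed
    then show ?thesis using key[OF that] by simp
  qed
  have P2: "g \<bullet> d < 0" if pd: "\<forall>x \<in> Delta_simplex. posdef (H x)" and d: "d \<in> feasible_dirs x"
    and ns: "\<not> supp d \<subseteq> S" for d
  proof -
    obtain l0 where l0: "l0 \<notin> S" "d $ l0 \<noteq> 0" using ns unfolding supp_def by auto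
    have dpos: "0 < d $ l0" using dnn[OF d l0(1)] l0(2) by simp
    have neg: "(g $ l0 - a) * d $ l0 < 0"
      using factA2[OF i0 l0(1) pd] dpos unfolding a_def by (simp add: mult_neg_pos)
    have rest: "(\<Sum>l\<in>- S - {l0}. (g $ l - a) * d $ l) \<le> 0"
    proof (rule sum_nonpos)
      fix l assume "l \<in> - S - {l0}"
      then show "(g $ l - a) * d $ l \<le> 0"
        using factA1[OF i0, of l] dnn[OF d, of l] unfolding a_def
        by (simp add: mult_nonpos_nonneg)
    qed
    have "(\<Sum>l\<in>- S. (g $ l - a) * d $ l) = (g $ l0 - a) * d $ l0 + (\<Sum>l\<in>- S - {l0}. (g $ l - a) * d $ l)"
      using l0(1) by (simp add: sum.remove)
    then show ?thesis using key[OF d] neg rest by simp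
  qed
  show ?thesis using P1 P2 unfolding x_def g_def by blast
qed

end
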